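(* Let $H=(V,E)$ be a $k$-uniform hypergraph and let $\mathcal{S}$ be the family of all its exact covers, i.e. all $E'\subseteq E$ with $\bigcup_{e\in E'}e=V$ and $e_1\cap e_2=\emptyset$ for distinct $e_1,e_2\in E'$. Let $f:E\to\mathbb{Z}_{>0}$ be any function and $m$ a positive integer. Then for every subset $U\subseteq V$, in the polynomial ring over $\mathrm{GF}(2^m)$ in the variables $\{v_e\}_{e\in E}$, $$\sum_{X\subseteq V\setminus U} W_{2,f}(H,U,X)=\sum_{E'\in\mathcal{S}}\prod_{e\in E'}v_e^{f(e)},$$ where $$W_{2,f}(H,U,X)=\sum_{E''}\prod_{e\in E''}v_e^{f(e)},$$ the sum ranging over all $E''\subseteq E$ satisfying: (Avoidance) $e\cap X=\emptyset$ for all $e\in E''$; (Cardinality) $|E''|=|V|/k$; (Coverage) $U\subseteq\bigcup_{e\in E''}e$; (Disjointness) $e_1\cap e_2\cap U=\emptyset$ for all distinct $e_1,e_2\in E''$.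
   Context: A hypergraph $H=(V,E)$ consists of a finite vertex set $V$ and a multiset $E$ of subsets of $V$; it is $k$-uniform if every edge has exactly $k$ vertices. Subsets of $E$ are sub-multisets, with each occurrence of an edge treated as a distinct element carrying its own variable $v_e$. *)

theory Defs
  imports Complex_Main "HOL-Library.Poly_Mapping"
begin

text \<open>Hypergraph: vertex set V, edges indexed by a finite index set E (so that
repeated edges of the multiset are distinct elements), the edge with index i being
the vertex set edge i.\<close>

type_synonym ('e, 'k) mpoly = "('e \<Rightarrow>\<^sub>0 nat) \<Rightarrow>\<^sub>0 'k"

definition var :: "'e \<Rightarrow> ('e, 'k::comm_ring_1) mpoly" where
  "var i = Poly_Mapping.single (Poly_Mapping.single i 1) 1"

definition uniform_hypergraph :: "nat \<Rightarrow> 'v set \<Rightarrow> 'e set \<Rightarrow> ('e \<Rightarrow> 'v set) \<Rightarrow> bool" where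
  "uniform_hypergraph k V E edge \<longleftrightarrow> finite V \<and> finite E \<and>
     (\<forall>i\<in>E. edge i \<subseteq> V \<and> card (edge i) = k)"

definition exact_covers :: "'v set \<Rightarrow> 'e set \<Rightarrow> ('e \<Rightarrow> 'v set) \<Rightarrow> 'e set set" where
  "exact_covers V E edge = {E'. E' \<subseteq> E \<and> (\<Union>i\<in>E'. edge i) = V \<and>
     (\<forall>i\<in>E'. \<forall>j\<in>E'. i \<noteq> j \<longrightarrow> edge i \<inter> edge j = {})}"

definition W2_sets :: "nat \<Rightarrow> 'v set \<Rightarrow> 'e set \<Rightarrow> ('e \<Rightarrow> 'v set) \<Rightarrow> 'v set \<Rightarrow> 'v set \<Rightarrow> 'e set set" where
  "W2_sets k V E edge U X = {E''. E'' \<subseteq> E \<and>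
     (\<forall>i\<in>E''. edge i \<inter> X = {}) \<and>
     real (card E'') = real (card V) / real k \<and>
     U \<subseteq> (\<Union>i\<in>E''. edge i) \<and>
     (\<forall>i\<in>E''. \<forall>j\<in>E''. i \<noteq> j \<longrightarrow> edge i \<inter> edge j \<inter> U = {})}"

definition W2f :: "nat \<Rightarrow> 'v set \<Rightarrow> 'e set \<Rightarrow> ('e \<Rightarrow> 'v set) \<Rightarrow> ('e \<Rightarrow> nat) \<Rightarrow> 'v set \<Rightarrow> 'v set
    \<Rightarrow> ('e, 'k::comm_ring_1) mpoly" where
  "W2f k V E edge f U X = (\<Sum>E''\<in>W2_sets k V E edge U X. \<Prod>i\<in>E''. var i ^ f i)"

end

theory Submission
  imports Defs "HOL-Number_Theory.Number_Theory"
begin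

lemma char2:
  assumes "card (UNIV :: 'k::{field,finite} set) = 2 ^ m" "m > 0"
  shows "(of_nat 2 :: 'k) = 0"
proof -
  have pos: "CHAR('k) > 0" by (rule finite_imp_CHAR_pos) simp
  hence pr: "prime CHAR('k)" by (rule prime_CHAR_semidom)
  have "CHAR('k) dvd 2 ^ m" using CHAR_dvd_CARD[where 'a='k] assms by simp
  hence "CHAR('k) dvd 2" using pr prime_dvd_power by blast
  hence "CHAR('k) = 2" using primes_dvd_imp_eq[OF pr two_is_prime_nat] by blast
  thus ?thesis by (metis of_nat_CHAR)
qed

lemma mpoly_double:
  assumes "(of_nat 2 :: 'k::comm_ring_1) = 0"
  shows "(x :: ('e,'k) mpoly) + x = 0"
proof (rule poly_mapping_eqI)
  fix m
  have "(Poly_Mapping.lookup x m :: 'k) + Poly_Mapping.lookup x m = of_nat 2 * Poly_Mapping.lookup x m" by (simp only: of_nat_numeral mult_2)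
  hence "(Poly_Mapping.lookup x m :: 'k) + Poly_Mapping.lookup x m = 0" using assms by simp
  hence z: "(Poly_Mapping.lookup x m :: 'k) + Poly_Mapping.lookup x m = 0" .
  have "Poly_Mapping.lookup (x + x) m = (Poly_Mapping.lookup x m :: 'k) + Poly_Mapping.lookup x m" by (rule Poly_Mapping.lookup_add)
  also note z
  also have "(0::'k) = Poly_Mapping.lookup 0 m" by (rule Poly_Mapping.lookup_zero[symmetric])
  finally show "Poly_Mapping.lookup (x + x) m = Poly_Mapping.lookup 0 m" .
qed

lemma pow2_times_zero:
  assumes "(of_nat 2 :: 'k::comm_ring_1) = 0" "n > 0"
  shows "of_nat (2 ^ n) * (x :: ('e,'k) mpoly) = 0"
proof -
  define q :: nat where "q = 2 ^ (n - 1)"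
  have "(2::nat) ^ n = 2 * 2 ^ (n - 1)" using assms(2) by (cases n) auto
  hence "(2::nat) ^ n = q + q" unfolding q_def by simp
  hence "of_nat (2 ^ n) * x = of_nat q * x + of_nat q * x" by (simp only: of_nat_add distrib_right)
  thus ?thesis using mpoly_double[OF assms(1), of "of_nat q * x"] by simp
qed

lemma sum_card_eq_imp_disjoint:
  assumes "finite I" "\<forall>i\<in>I. finite (A i)" "card (\<Union>i\<in>I. A i) = (\<Sum>i\<in>I. card (A i))"
    "i \<in> I" "j \<in> I" "i \<noteq> j"
  shows "A i \<inter> A j = {}"
proof (rule ccontr)
  assume ne: "A i \<inter> A j \<noteq> {}"
  let ?R = "I - {i, j}"
  have fi: "finite (A i)" "finite (A j)" using assms by auto
  have "(\<Union>i\<in>I. A i) = (A i \<union> A j) \<union> (\<Union>l\<in>?R. A l)" using assms by blast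
  hence "card (\<Union>i\<in>I. A i) \<le> card (A i \<union> A j) + card (\<Union>l\<in>?R. A l)"
    by (metis card_Un_le)
  also have "\<dots> \<le> card (A i \<union> A j) + (\<Sum>l\<in>?R. card (A l))"
    using card_UN_le[of ?R A] assms by simp
  also have "card (A i \<union> A j) < card (A i) + card (A j)"
    using card_Un_Int[OF fi] ne fi by (simp add: card_gt_0_iff)
  finally have lt: "card (\<Union>i\<in>I. A i) < card (A i) + card (A j) + (\<Sum>l\<in>?R. card (A l))"
    by simp
  have "(\<Sum>l\<in>I. card (A l)) = card (A i) + (\<Sum>l\<in>I - {i}. card (A l))"
    using assms by (simp add: sum.remove)
  also have "(\<Sum>l\<in>I - {i}. card (A l)) = card (A j) + (\<Sum>l\<in>I - {i} - {j}. card (A l))"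
    by (rule sum.remove) (use assms in auto)
  finally have "(\<Sum>l\<in>I. card (A l)) = card (A i) + card (A j) + (\<Sum>l\<in>?R. card (A l))"
    by (simp add: Diff_insert2[symmetric] insert_commute)
  thus False using lt assms(3) by simp
qed

theorem lemma2p4:
  fixes V :: "'v set" and E :: "'e set" and edge :: "'e \<Rightarrow> 'v set"
    and k :: nat and f :: "'e \<Rightarrow> nat" and m :: nat and U :: "'v set"
  assumes "k > 0"
    and "uniform_hypergraph k V E edge"
    and "\<And>i. i \<in> E \<Longrightarrow> f i > 0"
    and "m > 0"
    and "card (UNIV :: 'k set) = 2 ^ m"
    and "U \<subseteq> V"
  shows "(\<Sum>X\<in>Pow (V - U). (W2f k V E edge f U X :: ('e, 'k::{field,finite}) mpoly))
       = (\<Sum>E'\<in>exact_covers V E edge. \<Prod>i\<in>E'. var i ^ f i)"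
proof -
  have c2: "(of_nat 2 :: 'k) = 0" using char2 assms(4,5) by blast
  from assms(2) have finV: "finite V" and finE: "finite E"
    and ed: "\<And>i. i \<in> E \<Longrightarrow> edge i \<subseteq> V \<and> card (edge i) = k"
    unfolding uniform_hypergraph_def by auto
  define P :: "'e set \<Rightarrow> ('e,'k) mpoly" where "P E'' = (\<Prod>i\<in>E''. var i ^ f i)" for E''
  define T where "T = {E''. E'' \<subseteq> E \<and> real (card E'') = real (card V) / real k \<and>
     U \<subseteq> (\<Union>i\<in>E''. edge i) \<and>
     (\<forall>i\<in>E''. \<forall>j\<in>E''. i \<noteq> j \<longrightarrow> edge i \<inter> edge j \<inter> U = {})}"
  define R where "R X E'' = (\<forall>i\<in>E''. edge i \<inter> X = {})" for X :: "'v set" and E'' :: "'e set"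
  have finT: "finite T" using finE unfolding T_def
    by (rule finite_subset[rotated, OF finite_Pow_iff[THEN iffD2]]) auto
  have W: "W2_sets k V E edge U X = {E''\<in>T. R X E''}" for X
    unfolding W2_sets_def T_def R_def by auto
  have "(\<Sum>X\<in>Pow (V - U). (W2f k V E edge f U X :: ('e, 'k) mpoly))
      = (\<Sum>X\<in>Pow (V - U). \<Sum>E''\<in>{E''\<in>T. R X E''}. P E'')"
    unfolding W2f_def W P_def by simp
  also have "\<dots> = (\<Sum>E''\<in>T. \<Sum>X\<in>{X\<in>Pow (V - U). R X E''}. P E'')"
    by (rule sum.swap_restrict) (use finV finT in auto)
  also have "\<dots> = (\<Sum>E''\<in>T. if V - U \<subseteq> (\<Union>i\<in>E''. edge i) then P E'' else 0)"
  proof (rule sum.cong[OF refl])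
    fix E'' assume "E'' \<in> T"
    have eq: "{X\<in>Pow (V - U). R X E''} = Pow (V - U - (\<Union>i\<in>E''. edge i))"
      unfolding R_def by auto
    have fin: "finite (V - U - (\<Union>i\<in>E''. edge i))" using finV by auto
    have "(\<Sum>X\<in>{X\<in>Pow (V - U). R X E''}. P E'')
        = of_nat (2 ^ card (V - U - (\<Union>i\<in>E''. edge i))) * P E''"
    proof -
      have "card {X\<in>Pow (V - U). R X E''} = 2 ^ card (V - U - (\<Union>i\<in>E''. edge i))"
        unfolding eq by (rule card_Pow[OF fin])
      thus ?thesis by (simp only: sum_constant of_nat_mult)
    qed
    also have "\<dots> = (if V - U \<subseteq> (\<Union>i\<in>E''. edge i) then P E'' else 0)"
    proof (cases "V - U \<subseteq> (\<Union>i\<in>E''. edge i)")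
      case True
      hence "V - U - (\<Union>i\<in>E''. edge i) = {}" by auto
      hence c0: "card (V - U - (\<Union>i\<in>E''. edge i)) = 0" by (simp only: card.empty)
      show ?thesis using True by (simp only: c0 power_0 of_nat_1 mult_1 if_True)
    next
      case False
      hence "V - U - (\<Union>i\<in>E''. edge i) \<noteq> {}" by auto
      hence "card (V - U - (\<Union>i\<in>E''. edge i)) > 0" using fin by (simp add: card_gt_0_iff)
      thus ?thesis using False pow2_times_zero[OF c2] by simp
    qed
    finally show "(\<Sum>X\<in>{X\<in>Pow (V - U). R X E''}. P E'')
        = (if V - U \<subseteq> (\<Union>i\<in>E''. edge i) then P E'' else 0)" .
  qed
  also have "\<dots> = (\<Sum>E''\<in>{E''\<in>T. V - U \<subseteq> (\<Union>i\<in>E''. edge i)}. P E'')"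
    using finT by (simp add: sum.inter_filter)
  also have "{E''\<in>T. V - U \<subseteq> (\<Union>i\<in>E''. edge i)} = exact_covers V E edge"
  proof (intro Set.set_eqI iffI)
    fix E'' assume "E'' \<in> {E''\<in>T. V - U \<subseteq> (\<Union>i\<in>E''. edge i)}"
    hence sub: "E'' \<subseteq> E" and cr: "real (card E'') = real (card V) / real k"
      and cov: "U \<subseteq> (\<Union>i\<in>E''. edge i)" "V - U \<subseteq> (\<Union>i\<in>E''. edge i)"
      unfolding T_def by auto
    have finE'': "finite E''" by (rule finite_subset[OF sub finE])
    have un: "(\<Union>i\<in>E''. edge i) = V" using cov sub ed by blast
    have "real (card E'') * real k = real (card V)" using cr assms(1) by simp
    hence ck: "card E'' * k = card V" by (metis of_nat_eq_iff of_nat_mult)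
    have "(\<Sum>i\<in>E''. card (edge i)) = (\<Sum>i\<in>E''. k)" using sub ed by (intro sum.cong) auto
    hence "(\<Sum>i\<in>E''. card (edge i)) = card E'' * k" by simp
    hence scard: "card (\<Union>i\<in>E''. edge i) = (\<Sum>i\<in>E''. card (edge i))" using un ck by simp
    have fe: "\<forall>i\<in>E''. finite (edge i)"
    proof
      fix i assume "i \<in> E''"
      hence "edge i \<subseteq> V" using sub ed by blast
      thus "finite (edge i)" using finV by (rule finite_subset)
    qed
    have "\<forall>i\<in>E''. \<forall>j\<in>E''. i \<noteq> j \<longrightarrow> edge i \<inter> edge j = {}"
      using sum_card_eq_imp_disjoint[OF finE'' fe scard] by blast
    thus "E'' \<in> exact_covers V E edge" unfolding exact_covers_def using sub un by blast
  next
    fix E'' assume "E'' \<in> exact_covers V E edge"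
    hence sub: "E'' \<subseteq> E" and un: "(\<Union>i\<in>E''. edge i) = V"
      and dj: "\<forall>i\<in>E''. \<forall>j\<in>E''. i \<noteq> j \<longrightarrow> edge i \<inter> edge j = {}"
      unfolding exact_covers_def by auto
    have finE'': "finite E''" by (rule finite_subset[OF sub finE])
    have fe: "\<forall>i\<in>E''. finite (edge i)"
    proof
      fix i assume "i \<in> E''"
      hence "edge i \<subseteq> V" using sub ed by blast
      thus "finite (edge i)" using finV by (rule finite_subset)
    qed
    have "card V = (\<Sum>i\<in>E''. card (edge i))"
      using card_UN_disjoint[OF finE'' fe dj] un by simp
    also have "\<dots> = (\<Sum>i\<in>E''. k)" using sub ed by (intro sum.cong) auto
    also have "\<dots> = card E'' * k" by simp
    finally have "real (card V) = real (card E'') * real k" by simp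
    hence "real (card E'') = real (card V) / real k" using assms(1) by simp
    thus "E'' \<in> {E''\<in>T. V - U \<subseteq> (\<Union>i\<in>E''. edge i)}"
      unfolding T_def using sub un dj assms(6) by auto
  qed
  finally show ?thesis unfolding P_def .
qed

end
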